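(* For every integer $L\ge 0$ and every integer $n\ge 0$, $$b_L(n+1)=\frac{1}{n+1}\sum_{k=0}^{n}\binom{n+1}{k}^{L+1}(n+1-k)\,b_L(k)=\sum_{k=0}^{n}\binom{n}{k}\binom{n+1}{k}^{L}b_L(k),\qquad b_L(0)=1.$$ Consequently every $b_L(n)$ is a positive integer.
   Context: For an integer $L\ge 0$ let ${}_0F_L(z)=\sum_{n=0}^{\infty}\frac{z^n}{(n!)^{L+1}}$ (the hypergeometric series ${}_0F_L(1,\ldots,1;z)$ with $L$ parameters equal to $1$; e.g. ${}_0F_0(z)=e^z$). Define the real numbers $b_L(n)$, $n\ge 0$, by the formal power series identity $\exp\big({}_0F_L(z)-1\big)=\sum_{n=0}^{\infty}b_L(n)\frac{z^n}{(n!)^{L+1}}$. *)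

theory Defs
  imports "HOL-Computational_Algebra.Formal_Power_Series"
begin

definition hyp0F :: "nat \<Rightarrow> real fps" where
  "hyp0F L = Abs_fps (\<lambda>n. 1 / (fact n) ^ (L + 1))"

text \<open>b_L(n) defined by exp(0F_L(z) - 1) = sum b_L(n) z^n / (n!)^(L+1),
  where exp(G) for G with zero constant term is the composition fps_exp 1 oo G.\<close>
definition bL :: "nat \<Rightarrow> nat \<Rightarrow> real" where
  "bL L n = (fact n) ^ (L + 1) * fps_nth (fps_exp 1 oo (hyp0F L - 1)) n"

end

theory Submission
  imports Defs
begin

lemma E_nth: "fps_nth (fps_exp 1 oo (hyp0F L - 1)) i = bL L i / (fact i) ^ (L + 1)"
  by (simp add: bL_def)

lemma G_nth: "fps_nth (hyp0F L - 1) (Suc m) = 1 / (fact (Suc m)) ^ (L + 1)"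
  by (simp add: hyp0F_def)

lemma rec1:
  "bL L (n + 1) = (1 / real (n + 1)) *
     (\<Sum>k=0..n. real ((n + 1) choose k) ^ (L + 1) * real (n + 1 - k) * bL L k)"
proof -
  define G where "G = hyp0F L - 1"
  define E where "E = fps_exp (1::real) oo G"
  have G0: "fps_nth G 0 = 0" by (simp add: G_def hyp0F_def)
  have hD: "fps_deriv E = E * fps_deriv G"
    unfolding E_def using fps_compose_deriv[OF G0, of "fps_exp (1::real)"]
    by (simp add: mult.commute)
  have "real (n+1) * fps_nth E (n+1) = (\<Sum>i=0..n. fps_nth E i * (real (n - i + 1) * fps_nth G (n - i + 1)))"
    using arg_cong[OF hD, of "\<lambda>f. fps_nth f n"] by (simp add: fps_mult_nth)
  also have "\<dots> = (\<Sum>i=0..n. (real ((n + 1) choose i) ^ (L + 1) * real (n + 1 - i) * bL L i)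
        / fact (n+1) ^ (L+1))"
  proof (rule sum.cong[OF refl])
    fix i assume i: "i \<in> {0..n}"
    have ch: "real ((n + 1) choose i) = fact (n+1) / (fact i * fact (n + 1 - i))"
      using i by (intro binomial_fact) auto
    have e: "n - i + 1 = Suc (n - i)" "n + 1 - i = Suc (n - i)" using i by auto
    show "fps_nth E i * (real (n - i + 1) * fps_nth G (n - i + 1)) =
        (real ((n + 1) choose i) ^ (L + 1) * real (n + 1 - i) * bL L i) / fact (n+1) ^ (L+1)"
      unfolding ch E_def G_def E_nth e G_nth
      by (simp add: field_simps power_mult_distrib del: fact_Suc)
  qed
  also have "\<dots> = (\<Sum>k=0..n. real ((n + 1) choose k) ^ (L + 1) * real (n + 1 - k) * bL L k)
        / fact (n+1) ^ (L+1)"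
    by (simp add: sum_divide_distrib)
  finally have *: "real (n+1) * fps_nth E (n+1) = (\<Sum>k=0..n. real ((n + 1) choose k) ^ (L + 1) * real (n + 1 - k) * bL L k)
        / fact (n+1) ^ (L+1)" .
  have "bL L (n+1) = fact (n+1) ^ (L+1) * fps_nth E (n+1)" by (simp add: bL_def E_def G_def)
  also have "\<dots> = (1 / real (n + 1)) * (fact (n+1) ^ (L+1) * (real (n+1) * fps_nth E (n+1)))"
    by (simp add: field_simps del: fact_Suc)
  also have "\<dots> = (1 / real (n + 1)) *
     (\<Sum>k=0..n. real ((n + 1) choose k) ^ (L + 1) * real (n + 1 - k) * bL L k)"
    unfolding * by (simp del: fact_Suc)
  finally show ?thesis .
qed

lemma rec2:
  "bL L (n + 1) = (\<Sum>k=0..n. real (n choose k) * real ((n + 1) choose k) ^ L * bL L k)"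
proof -
  have "bL L (n + 1) = (\<Sum>k=0..n. (1 / real (n + 1)) * (real ((n + 1) choose k) ^ (L + 1) * real (n + 1 - k) * bL L k))"
    unfolding sum_distrib_left[symmetric] by (rule rec1)
  also have "\<dots> = (\<Sum>k=0..n. real (n choose k) * real ((n + 1) choose k) ^ L * bL L k)"
  proof (rule sum.cong[OF refl])
    fix k assume k: "k \<in> {0..n}"
    have "(n + 1 - k) * ((n + 1) choose k) = (n + 1) * (n choose k)"
      using binomial_absorb_comp[of "n+1" k] by simp
    then have h: "real (n + 1 - k) * real ((n + 1) choose k) = real (n + 1) * real (n choose k)"
      by (metis of_nat_mult)
    show "(1 / real (n + 1)) * (real ((n + 1) choose k) ^ (L + 1) * real (n + 1 - k) * bL L k)
        = real (n choose k) * real ((n + 1) choose k) ^ L * bL L k"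
    proof -
      have "real ((n + 1) choose k) ^ (L + 1) * real (n + 1 - k) =
            real ((n + 1) choose k) ^ L * (real (n + 1 - k) * real ((n + 1) choose k))"
        by (simp add: mult_ac)
      also have "\<dots> = real (n + 1) * (real (n choose k) * real ((n + 1) choose k) ^ L)"
        unfolding h by (simp add: mult_ac)
      finally have "real ((n + 1) choose k) ^ (L + 1) * real (n + 1 - k) * bL L k =
          real (n + 1) * (real (n choose k) * real ((n + 1) choose k) ^ L * bL L k)"
        by (metis mult.assoc)
      then show ?thesis by (simp only:) (simp del: of_nat_add of_nat_Suc)
    qed
  qed
  finally show ?thesis .
qed

lemma b0: "bL L 0 = 1"
  by (simp add: bL_def)

lemma pos: "bL L n \<in> \<int> \<and> bL L n > 0"
proof (induction n rule: less_induct)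
  case (less n)
  show ?case
  proof (cases n)
    case 0 then show ?thesis by (simp add: b0)
  next
    case (Suc m)
    have ints: "(\<Sum>k=0..m. real (m choose k) * real ((m + 1) choose k) ^ L * bL L k) \<in> \<int>"
      using less Suc by (intro Ints_sum Ints_mult) auto
    have "(\<Sum>k=0..m. real (m choose k) * real ((m + 1) choose k) ^ L * bL L k)
        = real (m choose 0) * real ((m + 1) choose 0) ^ L * bL L 0 +
          (\<Sum>k=1..m. real (m choose k) * real ((m + 1) choose k) ^ L * bL L k)"
      by (subst sum.atLeast_Suc_atMost) auto
    moreover have "(\<Sum>k=1..m. real (m choose k) * real ((m + 1) choose k) ^ L * bL L k) \<ge> 0"
    proof (intro sum_nonneg)
      fix k assume "k \<in> {1..m}"
      then have "k < n" using Suc by auto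
      then have "bL L k > 0" using less.IH by blast
      then show "real (m choose k) * real ((m + 1) choose k) ^ L * bL L k \<ge> 0" by simp
    qed
    ultimately have "(\<Sum>k=0..m. real (m choose k) * real ((m + 1) choose k) ^ L * bL L k) > 0"
      by (simp add: b0)
    with ints show ?thesis using rec2[of L m] Suc by simp
  qed
qed

theorem mainTheorem1:
  shows "(\<forall>L n::nat.
           bL L (n + 1) = (1 / real (n + 1)) *
              (\<Sum>k=0..n. real ((n + 1) choose k) ^ (L + 1) * real (n + 1 - k) * bL L k)
         \<and> bL L (n + 1) = (\<Sum>k=0..n. real (n choose k) * real ((n + 1) choose k) ^ L * bL L k))
       \<and> (\<forall>L. bL L 0 = 1)
       \<and> (\<forall>L n. bL L n \<in> \<int> \<and> bL L n > 0)"
  using rec1 rec2 b0 pos by blast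

end
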